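(* Let $m,n\in\mathbb{N}$, $a\in\mathbb{R}$, $b\in(a,\infty)$, $f\in\mathscr A_{m,n}$. Then the function $$\mathbb{R}^m\times\mathbb{R}^{n-1}\ni(\theta,x_1,\dots,x_{n-1})\mapsto\int_a^bf(\theta,x_1,\dots,x_n)\,\mathrm dx_n\in\mathbb{R}$$ belongs to $\mathscr A_{m,n-1}$.
   Context: For $n\in\mathbb{N}_0$, $\mathcal P_n$ denotes the set of polynomials $\mathbb{R}^n\to\mathbb{R}$ (with $\mathbb{R}^0=\{0\}$). For $n\in\mathbb{N}$, $\mathcal R_n$ is the set of functions $R\colon\mathbb{R}^n\to\mathbb{R}$ for which there exist $P,Q\in\mathcal P_n$ with $R(x)=P(x)/Q(x)$ if $Q(x)\neq0$ and $R(x)=0$ if $Q(x)=0$. For $m\in\mathbb{N}$, $n\in\mathbb{N}_0$, $\mathscr A_{m,n}$ is the real linear span of all functions $g\colon\mathbb{R}^m\times\mathbb{R}^n\to\mathbb{R}$ of the form $g(\theta,x)=R(\theta)Q(x)\prod_{i=1}^r\mathbb 1_{A_i}\big(P_{i,0}(\theta)+\sum_{j=1}^nP_{i,j}(\theta)x_j\big)$ with $r\in\mathbb{N}$, $A_1,\dots,A_r\in\{\{0\},[0,\infty),(0,\infty)\}$, $R\in\mathcal R_m$, $Q\in\mathcal P_n$, $P_{i,j}\in\mathcal P_m$. *)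

theory Defs
  imports "HOL-Analysis.Analysis"
begin

text \<open>Points of R^n are represented as functions nat => real; only the
coordinates 0..n-1 are used (coordinate x_j of the paper, j = 1..n, is x (j-1)).\<close>

inductive_set poly_fun :: "nat \<Rightarrow> ((nat \<Rightarrow> real) \<Rightarrow> real) set" for n :: nat where
  const: "(\<lambda>x. c) \<in> poly_fun n"
| coord: "i < n \<Longrightarrow> (\<lambda>x. x i) \<in> poly_fun n"
| add: "p \<in> poly_fun n \<Longrightarrow> q \<in> poly_fun n \<Longrightarrow> (\<lambda>x. p x + q x) \<in> poly_fun n"
| mult: "p \<in> poly_fun n \<Longrightarrow> q \<in> poly_fun n \<Longrightarrow> (\<lambda>x. p x * q x) \<in> poly_fun n"

definition rat_fun :: "nat \<Rightarrow> ((nat \<Rightarrow> real) \<Rightarrow> real) set" where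
  "rat_fun n = {R. \<exists>P\<in>poly_fun n. \<exists>Q\<in>poly_fun n.
      \<forall>x. R x = (if Q x \<noteq> 0 then P x / Q x else 0)}"

definition A_gen :: "nat \<Rightarrow> nat \<Rightarrow> ((nat \<Rightarrow> real) \<Rightarrow> (nat \<Rightarrow> real) \<Rightarrow> real) set" where
  "A_gen m n = {g. \<exists>(r::nat) (A::nat \<Rightarrow> real set) R Q (P::nat \<Rightarrow> nat \<Rightarrow> (nat \<Rightarrow> real) \<Rightarrow> real).
      0 < r \<and>
      (\<forall>i<r. A i \<in> {{0}, {0..}, {0<..}}) \<and>
      R \<in> rat_fun m \<and> Q \<in> poly_fun n \<and>
      (\<forall>i<r. \<forall>j\<le>n. P i j \<in> poly_fun m) \<and>
      (\<forall>\<theta> x. g \<theta> x = R \<theta> * Q x *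
         (\<Prod>i<r. indicator (A i) (P i 0 \<theta> + (\<Sum>j=1..n. P i j \<theta> * x (j - 1)))))}"

inductive_set A_space :: "nat \<Rightarrow> nat \<Rightarrow> ((nat \<Rightarrow> real) \<Rightarrow> (nat \<Rightarrow> real) \<Rightarrow> real) set"
  for m n :: nat where
  zero: "(\<lambda>\<theta> x. 0) \<in> A_space m n"
| step: "g \<in> A_gen m n \<Longrightarrow> h \<in> A_space m n \<Longrightarrow>
         (\<lambda>\<theta> x. c * g \<theta> x + h \<theta> x) \<in> A_space m n"

end

theory Submission
  imports Defs
begin


definition three :: "real set set" where "three = {{0}, {0..}, {0<..}}"

lemma rat_fun_alt: "rat_fun n = {R. \<exists>P\<in>poly_fun n. \<exists>Q\<in>poly_fun n. R = (\<lambda>x. P x / Q x)}"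
proof -
  have e: "\<And>P Q x. (if Q x \<noteq> 0 then P x / Q x else 0) = P x / (Q x::real)" by simp
  show ?thesis unfolding rat_fun_def e by (auto simp: fun_eq_iff)
qed

lemma rat_fun_mult: "R1 \<in> rat_fun n \<Longrightarrow> R2 \<in> rat_fun n \<Longrightarrow> (\<lambda>x. R1 x * R2 x) \<in> rat_fun n"
proof -
  assume "R1 \<in> rat_fun n" "R2 \<in> rat_fun n"
  then obtain P Q P' Q' where "P \<in> poly_fun n" "Q \<in> poly_fun n" "P' \<in> poly_fun n" "Q' \<in> poly_fun n"
    "R1 = (\<lambda>x. P x / Q x)" "R2 = (\<lambda>x. P' x / Q' x)" unfolding rat_fun_alt by blast
  then show ?thesis unfolding rat_fun_alt
    by (intro CollectI bexI[of _ "\<lambda>x. P x * P' x"] bexI[of _ "\<lambda>x. Q x * Q' x"] poly_fun.mult) auto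
qed

lemma poly_rat: "P \<in> poly_fun n \<Longrightarrow> P \<in> rat_fun n"
  unfolding rat_fun_alt by (rule CollectI, rule bexI[of _ P], rule bexI[of _ "\<lambda>x. 1"]) (auto intro: poly_fun.const)

lemma inv_rat: "P \<in> poly_fun n \<Longrightarrow> (\<lambda>x. 1 / P x) \<in> rat_fun n"
  unfolding rat_fun_alt by (rule CollectI, rule bexI[of _ "\<lambda>x. 1"], rule bexI[of _ P]) (auto intro: poly_fun.const)

lemma gen_intro:
  assumes "R \<in> rat_fun m" "Q \<in> poly_fun n" "\<forall>j\<le>n. P j \<in> poly_fun m" "A \<in> three"
  shows "(\<lambda>\<theta> x. R \<theta> * Q x * indicator A (P 0 \<theta> + (\<Sum>j=1..n. P j \<theta> * x (j - 1)))) \<in> A_gen m n"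
  unfolding A_gen_def
  apply (rule CollectI)
  apply (rule exI[of _ 1], rule exI[of _ "\<lambda>_. A"], rule exI[of _ R], rule exI[of _ Q], rule exI[of _ "\<lambda>_. P"])
  using assms by (auto simp: three_def)

lemma gen_A: "g \<in> A_gen m n \<Longrightarrow> g \<in> A_space m n"
proof -
  assume "g \<in> A_gen m n"
  from A_space.step[OF this A_space.zero, of 1] show ?thesis by simp
qed

lemma A_add: "f \<in> A_space m n \<Longrightarrow> g \<in> A_space m n \<Longrightarrow> (\<lambda>\<theta> x. f \<theta> x + g \<theta> x) \<in> A_space m n"
proof (induction f rule: A_space.induct)
  case zero then show ?case by simp
next
  case (step g' h c)
  have "(\<lambda>\<theta> x. c * g' \<theta> x + (h \<theta> x + g \<theta> x)) \<in> A_space m n"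
    using step by (intro A_space.step) auto
  then show ?case by (simp add: add.assoc)
qed

lemma A_smult: "f \<in> A_space m n \<Longrightarrow> (\<lambda>\<theta> x. c * f \<theta> x) \<in> A_space m n"
proof (induction f rule: A_space.induct)
  case zero then show ?case by (simp add: A_space.zero)
next
  case (step g h d)
  have "(\<lambda>\<theta> x. (c*d) * g \<theta> x + (c * h \<theta> x)) \<in> A_space m n"
    using step by (intro A_space.step) auto
  then show ?case by (simp add: algebra_simps)
qed

lemma A_sum: "finite I \<Longrightarrow> (\<And>i. i \<in> I \<Longrightarrow> f i \<in> A_space m n) \<Longrightarrow> (\<lambda>\<theta> x. \<Sum>i\<in>I. f i \<theta> x) \<in> A_space m n"
proof (induction I rule: finite_induct)
  case empty then show ?case by (simp add: A_space.zero)
next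
  case (insert a F) then show ?case using A_add[of "f a" m n "\<lambda>\<theta> x. \<Sum>i\<in>F. f i \<theta> x"] by simp
qed

lemma prod_split:
  fixes f :: "nat \<Rightarrow> real"
  shows "(\<Prod>i<r1+r2. f i) = (\<Prod>i<r1. f i) * (\<Prod>i<r2. f (i + r1))"
proof -
  have "{..<r1+r2} = {..<r1} \<union> {r1..<r2+r1}" by auto
  then have "(\<Prod>i<r1+r2. f i) = (\<Prod>i\<in>{..<r1} \<union> {r1..<r2+r1}. f i)" by simp
  also have "\<dots> = (\<Prod>i<r1. f i) * (\<Prod>i\<in>{0+r1..<r2+r1}. f i)"
    by (subst prod.union_disjoint) auto
  finally have "(\<Prod>i<r1+r2. f i) = (\<Prod>i<r1. f i) * (\<Prod>i\<in>{0+r1..<r2+r1}. f i)" .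
  also have "(\<Prod>i\<in>{0+r1..<r2+r1}. f i) = (\<Prod>i\<in>{0..<r2}. f (i + r1))"
    by (rule prod.shift_bounds_nat_ivl)
  finally show ?thesis by (simp add: lessThan_atLeast0)
qed

lemma gen_mult: assumes "g1 \<in> A_gen m n" "g2 \<in> A_gen m n"
  shows "(\<lambda>\<theta> x. g1 \<theta> x * g2 \<theta> x) \<in> A_gen m n"
proof -
  obtain r1 :: nat and A1 :: "nat \<Rightarrow> real set" and R1 Q1 and P1 :: "nat \<Rightarrow> nat \<Rightarrow> (nat \<Rightarrow> real) \<Rightarrow> real" where 1: "0 < r1" "\<forall>i<r1. A1 i \<in> {{0}, {0..}, {0<..}}" "R1 \<in> rat_fun m" "Q1 \<in> poly_fun n"
      "\<forall>i<r1. \<forall>j\<le>n. P1 i j \<in> poly_fun m"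
      "\<forall>\<theta> x. g1 \<theta> x = R1 \<theta> * Q1 x * (\<Prod>i<r1. indicator (A1 i) (P1 i 0 \<theta> + (\<Sum>j=1..n. P1 i j \<theta> * x (j - 1))))"
    using assms(1) unfolding A_gen_def mem_Collect_eq by (elim exE conjE) blast
  obtain r2 :: nat and A2 :: "nat \<Rightarrow> real set" and R2 Q2 and P2 :: "nat \<Rightarrow> nat \<Rightarrow> (nat \<Rightarrow> real) \<Rightarrow> real" where 2: "0 < r2" "\<forall>i<r2. A2 i \<in> {{0}, {0..}, {0<..}}" "R2 \<in> rat_fun m" "Q2 \<in> poly_fun n"
      "\<forall>i<r2. \<forall>j\<le>n. P2 i j \<in> poly_fun m"
      "\<forall>\<theta> x. g2 \<theta> x = R2 \<theta> * Q2 x * (\<Prod>i<r2. indicator (A2 i) (P2 i 0 \<theta> + (\<Sum>j=1..n. P2 i j \<theta> * x (j - 1))))"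
    using assms(2) unfolding A_gen_def mem_Collect_eq by (elim exE conjE) blast
  define A where "A i = (if i < r1 then A1 i else A2 (i - r1))" for i
  define P where "P i = (if i < r1 then P1 i else P2 (i - r1))" for i
  show ?thesis unfolding A_gen_def
  proof (rule CollectI, intro exI conjI)
    show "0 < r1 + r2" using 1 by simp
    show "\<forall>i<r1+r2. A i \<in> {{0}, {0..}, {0<..}}"
    proof (intro allI impI)
      fix i assume "i < r1 + r2"
      then show "A i \<in> {{0}, {0..}, {0<..}}" using 1(2) 2(2) unfolding A_def
        by (cases "i < r1") auto
    qed
    show "(\<lambda>\<theta>. R1 \<theta> * R2 \<theta>) \<in> rat_fun m" using 1 2 by (intro rat_fun_mult)
    show "(\<lambda>x. Q1 x * Q2 x) \<in> poly_fun n" using 1 2 by (intro poly_fun.mult)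
    show "\<forall>i<r1+r2. \<forall>j\<le>n. P i j \<in> poly_fun m"
    proof (intro allI impI)
      fix i j assume "i < r1 + r2" "j \<le> n"
      then show "P i j \<in> poly_fun m" using 1(5) 2(5) unfolding P_def
        by (cases "i < r1") auto
    qed
    show "\<forall>\<theta> x. g1 \<theta> x * g2 \<theta> x = R1 \<theta> * R2 \<theta> * (Q1 x * Q2 x) *
        (\<Prod>i<r1+r2. indicator (A i) (P i 0 \<theta> + (\<Sum>j=1..n. P i j \<theta> * x (j - 1))))"
    proof (intro allI)
      fix \<theta> x
      let ?F = "\<lambda>i. indicator (A i) (P i 0 \<theta> + (\<Sum>j=1..n. P i j \<theta> * x (j - 1))) :: real"
      have a: "(\<Prod>i<r1. ?F i) = (\<Prod>i<r1. indicator (A1 i) (P1 i 0 \<theta> + (\<Sum>j=1..n. P1 i j \<theta> * x (j - 1))))"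
        by (rule prod.cong) (auto simp: A_def P_def)
      have b: "(\<Prod>i<r2. ?F (i + r1)) = (\<Prod>i<r2. indicator (A2 i) (P2 i 0 \<theta> + (\<Sum>j=1..n. P2 i j \<theta> * x (j - 1))))"
        by (rule prod.cong) (auto simp: A_def P_def)
      show "g1 \<theta> x * g2 \<theta> x = R1 \<theta> * R2 \<theta> * (Q1 x * Q2 x) * (\<Prod>i<r1+r2. ?F i)"
        unfolding prod_split[of ?F r1 r2] a b using 1(6) 2(6) by (simp add: algebra_simps)
    qed
  qed
qed

lemma A_mult_gen: "f \<in> A_space m n \<Longrightarrow> g \<in> A_gen m n \<Longrightarrow> (\<lambda>\<theta> x. g \<theta> x * f \<theta> x) \<in> A_space m n"
proof (induction f rule: A_space.induct)
  case zero then show ?case by (simp add: A_space.zero)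
next
  case (step g' h c)
  have "(\<lambda>\<theta> x. c * (g \<theta> x * g' \<theta> x) + g \<theta> x * h \<theta> x) \<in> A_space m n"
    using step gen_mult by (intro A_space.step) auto
  then show ?case by (simp add: algebra_simps)
qed

lemma A_mult: "f \<in> A_space m n \<Longrightarrow> g \<in> A_space m n \<Longrightarrow> (\<lambda>\<theta> x. f \<theta> x * g \<theta> x) \<in> A_space m n"
proof (induction f rule: A_space.induct)
  case zero then show ?case by (simp add: A_space.zero)
next
  case (step g' h c)
  have "(\<lambda>\<theta> x. c * (g' \<theta> x * g \<theta> x) + h \<theta> x * g \<theta> x) \<in> A_space m n"
    using step A_mult_gen A_smult A_add by blast
  then show ?case by (simp add: algebra_simps)
qed

lemma A_pow: "f \<in> A_space m n \<Longrightarrow> (\<lambda>\<theta> x. f \<theta> x ^ k) \<in> A_space m n"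
proof (induction k)
  case 0
  have "(\<lambda>\<theta> x. 1 * 1 * indicator {0..} (0 + (\<Sum>j=1..n. 0 * x (j - 1)))) \<in> A_gen m n"
    using gen_intro[of "\<lambda>_. 1" m "\<lambda>_. 1" n "\<lambda>_ _. 0" "{0..}"]
    by (auto intro: poly_rat poly_fun.const simp: three_def)
  then show ?case by (auto dest!: gen_A)
next
  case (Suc k) then show ?case using A_mult[of f m n "\<lambda>\<theta> x. f \<theta> x ^ k"] by simp
qed

lemma A_rat: "R \<in> rat_fun m \<Longrightarrow> (\<lambda>\<theta> x. R \<theta>) \<in> A_space m n"
proof -
  assume "R \<in> rat_fun m"
  then have "(\<lambda>\<theta> x. R \<theta> * 1 * indicator {0..} (0 + (\<Sum>j=1..n. 0 * x (j - 1)))) \<in> A_gen m n"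
    using gen_intro[of R m "\<lambda>_. 1" n "\<lambda>_ _. 0" "{0..}"]
    by (auto intro: poly_fun.const simp: three_def)
  then show ?thesis by (auto dest!: gen_A)
qed

lemma A_const: "(\<lambda>\<theta> x. c) \<in> A_space m n"
  using A_rat[of "\<lambda>_. c"] poly_rat[OF poly_fun.const] by simp

lemma A_polyx: "Q \<in> poly_fun n \<Longrightarrow> (\<lambda>\<theta> x. Q x) \<in> A_space m n"
proof -
  assume "Q \<in> poly_fun n"
  then have "(\<lambda>\<theta> x. 1 * Q x * indicator {0..} (0 + (\<Sum>j=1..n. 0 * x (j - 1)))) \<in> A_gen m n"
    using gen_intro[of "\<lambda>_. 1" m Q n "\<lambda>_ _. 0" "{0..}"]
    by (auto intro: poly_fun.const poly_rat simp: three_def)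
  then show ?thesis by (auto dest!: gen_A)
qed

definition LF :: "nat \<Rightarrow> nat \<Rightarrow> ((nat \<Rightarrow> real) \<Rightarrow> (nat \<Rightarrow> real) \<Rightarrow> real) set" where
  "LF m n = {L. \<exists>P. (\<forall>j\<le>n. P j \<in> poly_fun m) \<and> (\<forall>\<theta> x. L \<theta> x = P 0 \<theta> + (\<Sum>j=1..n. P j \<theta> * x (j - 1)))}"

lemma A_ind: assumes "L \<in> LF m n" "A \<in> three" shows "(\<lambda>\<theta> x. indicator A (L \<theta> x)) \<in> A_space m n"
proof -
  obtain P where P: "\<forall>j\<le>n. P j \<in> poly_fun m" "\<forall>\<theta> x. L \<theta> x = P 0 \<theta> + (\<Sum>j=1..n. P j \<theta> * x (j - 1))"
    using assms(1) unfolding LF_def by blast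
  have "(\<lambda>\<theta> x. 1 * 1 * indicator A (P 0 \<theta> + (\<Sum>j=1..n. P j \<theta> * x (j - 1)))) \<in> A_gen m n"
    using gen_intro[of "\<lambda>_. 1" m "\<lambda>_. 1" n P A] P assms(2)
    by (auto intro: poly_fun.const poly_rat)
  then show ?thesis using P by (auto dest!: gen_A)
qed

lemma A_LF: assumes "L \<in> LF m n" shows "L \<in> A_space m n"
proof -
  obtain P where P: "\<forall>j\<le>n. P j \<in> poly_fun m" "\<forall>\<theta> x. L \<theta> x = P 0 \<theta> + (\<Sum>j=1..n. P j \<theta> * x (j - 1))"
    using assms(1) unfolding LF_def by blast
  have "(\<lambda>\<theta> x. P 0 \<theta> + (\<Sum>j=1..n. P j \<theta> * x (j - 1))) \<in> A_space m n"
    using P(1)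
    by (intro A_add A_sum A_mult A_rat poly_rat A_polyx poly_fun.coord) auto
  moreover have "L = (\<lambda>\<theta> x. P 0 \<theta> + (\<Sum>j=1..n. P j \<theta> * x (j - 1)))" using P(2) by auto
  ultimately show ?thesis by simp
qed

lemma LF_poly: "e \<in> poly_fun m \<Longrightarrow> (\<lambda>\<theta> x. e \<theta>) \<in> LF m n"
  unfolding LF_def by (rule CollectI, rule exI[of _ "\<lambda>j. if j = 0 then e else (\<lambda>_. 0)"]) (auto intro: poly_fun.const)

lemma LF_comb: assumes "c \<in> LF m n" "d \<in> LF m n" "e \<in> poly_fun m" "f \<in> poly_fun m"
  shows "(\<lambda>\<theta> x. e \<theta> * c \<theta> x + f \<theta> * d \<theta> x) \<in> LF m n"
proof -
  obtain P where P: "\<forall>j\<le>n. P j \<in> poly_fun m" "\<forall>\<theta> x. c \<theta> x = P 0 \<theta> + (\<Sum>j=1..n. P j \<theta> * x (j - 1))"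
    using assms(1) unfolding LF_def by blast
  obtain P' where P': "\<forall>j\<le>n. P' j \<in> poly_fun m" "\<forall>\<theta> x. d \<theta> x = P' 0 \<theta> + (\<Sum>j=1..n. P' j \<theta> * x (j - 1))"
    using assms(2) unfolding LF_def by blast
  show ?thesis unfolding LF_def
  proof (rule CollectI, rule exI[of _ "\<lambda>j \<theta>. e \<theta> * P j \<theta> + f \<theta> * P' j \<theta>"], intro conjI allI impI)
    fix j assume "j \<le> n" then show "(\<lambda>\<theta>. e \<theta> * P j \<theta> + f \<theta> * P' j \<theta>) \<in> poly_fun m"
      using P P' assms by (intro poly_fun.add poly_fun.mult) auto
  next
    fix \<theta> x show "e \<theta> * c \<theta> x + f \<theta> * d \<theta> x = e \<theta> * P 0 \<theta> + f \<theta> * P' 0 \<theta> +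
       (\<Sum>j = 1..n. (e \<theta> * P j \<theta> + f \<theta> * P' j \<theta>) * x (j - 1))"
      using P(2) P'(2) by (simp add: algebra_simps sum.distrib sum_distrib_left)
  qed
qed

lemma LF_cross: assumes "c \<in> LF m n" "d \<in> LF m n" "e \<in> poly_fun m" "f \<in> poly_fun m"
  shows "(\<lambda>\<theta> x. c \<theta> x * f \<theta> - d \<theta> x * e \<theta>) \<in> LF m n"
proof -
  have "(\<lambda>\<theta>. - e \<theta>) \<in> poly_fun m"
    using assms(3) poly_fun.mult[OF poly_fun.const[of "-1"] assms(3)] by simp
  then have "(\<lambda>\<theta> x. f \<theta> * c \<theta> x + (- e \<theta>) * d \<theta> x) \<in> LF m n"
    using assms by (intro LF_comb) auto
  then show ?thesis by (simp add: algebra_simps)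
qed

lemma LF_neg: "c \<in> LF m n \<Longrightarrow> (\<lambda>\<theta> x. - c \<theta> x) \<in> LF m n"
  using LF_comb[of c m n c "\<lambda>_. -1" "\<lambda>_. 0"] by (simp add: poly_fun.const)

lemma poly_neg: "e \<in> poly_fun m \<Longrightarrow> (\<lambda>\<theta>. - e \<theta>) \<in> poly_fun m"
  using poly_fun.mult[OF poly_fun.const[of "-1"]] by fastforce



inductive_set Tset :: "nat \<Rightarrow> ((nat \<Rightarrow> real) \<Rightarrow> real \<Rightarrow> real) set" for N :: nat where
  zero: "(\<lambda>x t. 0) \<in> Tset N"
| step: "q \<in> poly_fun N \<Longrightarrow> h \<in> Tset N \<Longrightarrow> (\<lambda>x t. q x * t ^ k + h x t) \<in> Tset N"

lemma T_add: "f \<in> Tset N \<Longrightarrow> g \<in> Tset N \<Longrightarrow> (\<lambda>x t. f x t + g x t) \<in> Tset N"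
proof (induction f rule: Tset.induct)
  case zero then show ?case by simp
next
  case (step q h k)
  have "(\<lambda>x t. q x * t ^ k + (h x t + g x t)) \<in> Tset N" using step by (intro Tset.step) auto
  then show ?case by (simp add: add.assoc)
qed

lemma T_mono: "g \<in> Tset N \<Longrightarrow> q \<in> poly_fun N \<Longrightarrow> (\<lambda>x t. q x * t ^ k * g x t) \<in> Tset N"
proof (induction g rule: Tset.induct)
  case zero then show ?case by (simp add: Tset.zero)
next
  case (step q' h k')
  have "(\<lambda>x t. (q x * q' x) * t ^ (k + k') + q x * t ^ k * h x t) \<in> Tset N"
    using step by (intro Tset.step poly_fun.mult) auto
  then show ?case by (simp add: algebra_simps power_add)
qed

lemma T_mult: "f \<in> Tset N \<Longrightarrow> g \<in> Tset N \<Longrightarrow> (\<lambda>x t. f x t * g x t) \<in> Tset N"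
proof (induction f rule: Tset.induct)
  case zero then show ?case by (simp add: Tset.zero)
next
  case (step q h k)
  have "(\<lambda>x t. q x * t ^ k * g x t + h x t * g x t) \<in> Tset N"
    using step by (intro T_add T_mono) auto
  then show ?case by (simp add: algebra_simps)
qed

lemma T_poly: assumes "Q \<in> poly_fun (Suc N)" shows "(\<lambda>x t. Q (x(N := t))) \<in> Tset N"
  using assms
proof (induction Q rule: poly_fun.induct)
  case (const c)
  have "(\<lambda>x t. c * t ^ 0 + 0) \<in> Tset N" by (intro Tset.step Tset.zero poly_fun.const)
  then show ?case by simp
next
  case (coord i)
  show ?case
  proof (cases "i = N")
    case True
    have "(\<lambda>x t. 1 * t ^ 1 + 0) \<in> Tset N" by (intro Tset.step Tset.zero poly_fun.const)
    then show ?thesis using True by simp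
  next
    case False
    then have "i < N" using coord by simp
    then have "(\<lambda>x t. x i * t ^ 0 + 0) \<in> Tset N" by (intro Tset.step Tset.zero poly_fun.coord)
    then show ?thesis using False by simp
  qed
next
  case (add p q) then show ?case using T_add[of "\<lambda>x t. p (x(N := t))" N "\<lambda>x t. q (x(N := t))"] by (simp del: fun_upd_apply)
next
  case (mult p q) then show ?case using T_mult[of "\<lambda>x t. p (x(N := t))" N "\<lambda>x t. q (x(N := t))"] by (simp del: fun_upd_apply)
qed

lemma T_cont: "G \<in> Tset N \<Longrightarrow> continuous_on S (G x)"
  by (induction G rule: Tset.induct) (auto intro!: continuous_intros)



definition SS :: "nat \<Rightarrow> (nat \<Rightarrow> real set) \<Rightarrow> (nat \<Rightarrow> real) \<Rightarrow> (nat \<Rightarrow> real) \<Rightarrow> real set" where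
  "SS r A c e = {t. \<forall>i<r. c i + e i * t \<in> A i}"

lemma SS_0[simp]: "SS 0 A c e = UNIV" by (simp add: SS_def)
lemma SS_Suc: "SS (Suc r) A c e = {t. c r + e r * t \<in> A r} \<inter> SS r A c e"
  by (auto simp: SS_def less_Suc_eq)

lemma int_power: "integral {lo..hi} (\<lambda>t. t^k) = (if lo \<le> hi then (hi^Suc k - lo^Suc k)/Suc k else 0)"
proof (cases "lo \<le> hi")
  case True
  have "((\<lambda>t::real. t^k) has_integral ((\<lambda>t. t^Suc k / Suc k) hi - (\<lambda>t. t^Suc k / Suc k) lo)) {lo..hi}"
  proof (rule fundamental_theorem_of_calculus[OF True])
    fix x :: real
    have "((\<lambda>t. t^Suc k / Suc k) has_real_derivative x^k) (at x within {lo..hi})"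
      by (intro derivative_eq_intros) auto
    then show "((\<lambda>t. t^Suc k / Suc k) has_vector_derivative x^k) (at x within {lo..hi})"
      by (simp add: has_real_derivative_iff_has_vector_derivative)
  qed
  then show ?thesis using True by (simp add: integral_unique diff_divide_distrib)
next
  case False then show ?thesis by simp
qed

lemma spike: assumes "X - Y \<subseteq> {u}" "Y - X \<subseteq> {u}"
  shows "integral X h = integral Y h \<and> ((h::real\<Rightarrow>real) integrable_on X \<longleftrightarrow> h integrable_on Y)"
proof -
  have n1: "negligible (X - Y)" "negligible (Y - X)" using assms negligible_subset negligible_sing by metis+
  show ?thesis
  proof
    show "integral X h = integral Y h"
      by (rule integral_spike_set) (auto intro: negligible_subset[OF n1(1)] negligible_subset[OF n1(2)])
    show "h integrable_on X \<longleftrightarrow> h integrable_on Y"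
      by (rule integrable_spike_set_eq) (use n1 in auto)
  qed
qed

lemma pos_iff1: "(e::real) > 0 \<Longrightarrow> (0 \<le> c + e * t) \<longleftrightarrow> -c/e \<le> t"
  by (simp add: field_simps, arith)
lemma pos_iff2: "(e::real) > 0 \<Longrightarrow> (0 < c + e * t) \<longleftrightarrow> -c/e < t"
  by (simp add: field_simps, arith)
lemma neg_iff1: "(e::real) < 0 \<Longrightarrow> (0 \<le> c + e * t) \<longleftrightarrow> t \<le> -c/e"
  by (simp add: field_simps, arith)
lemma neg_iff2: "(e::real) < 0 \<Longrightarrow> (0 < c + e * t) \<longleftrightarrow> t < -c/e"
  by (simp add: field_simps, arith)
lemma zero_iff: "(e::real) \<noteq> 0 \<Longrightarrow> (c + e * t = 0) \<longleftrightarrow> t = -c/e"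
  by (auto simp: field_simps)

lemma step_zero: "(e::real) = 0 \<Longrightarrow> {lo..hi} \<inter> ({t. c + e*t \<in> A} \<inter> R) = (if c \<in> A then {lo..hi} \<inter> R else {})"
  by auto

lemma step_pos: assumes "(e::real) > 0" "A = {0..} \<or> A = {0<..}"
  shows "{lo..hi} \<inter> ({t. c + e*t \<in> A} \<inter> R) - {max lo (-c/e)..hi} \<inter> R \<subseteq> {-c/e}"
    "{max lo (-c/e)..hi} \<inter> R - {lo..hi} \<inter> ({t. c + e*t \<in> A} \<inter> R) \<subseteq> {-c/e}"
  using assms pos_iff1[OF assms(1), of c] pos_iff2[OF assms(1), of c] by auto

lemma step_neg: assumes "(e::real) < 0" "A = {0..} \<or> A = {0<..}"
  shows "{lo..hi} \<inter> ({t. c + e*t \<in> A} \<inter> R) - {lo..min hi (-c/e)} \<inter> R \<subseteq> {-c/e}"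
    "{lo..min hi (-c/e)} \<inter> R - {lo..hi} \<inter> ({t. c + e*t \<in> A} \<inter> R) \<subseteq> {-c/e}"
  using assms neg_iff1[OF assms(1), of c] neg_iff2[OF assms(1), of c] by auto

lemma step_pt: assumes "(e::real) \<noteq> 0"
  shows "{lo..hi} \<inter> ({t. c + e*t \<in> {0}} \<inter> R) - {} \<subseteq> {-c/e}" "{} - {lo..hi} \<inter> ({t. c + e*t \<in> {0}} \<inter> R) \<subseteq> {-c/e}"
  using assms zero_iff[OF assms(1), of c] by auto

lemma integrable_SS:
  fixes h :: "real \<Rightarrow> real"
  assumes "continuous_on UNIV h" "\<forall>i<r. A i \<in> three"
  shows "h integrable_on ({lo..hi} \<inter> SS r A c e)"
  using assms(2)
proof (induction r arbitrary: lo hi)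
  case 0
  have "continuous_on {lo..hi} h" using continuous_on_subset[OF assms(1)] by blast
  then show ?case using integrable_continuous_interval by simp
next
  case (Suc r)
  have IH: "\<And>lo hi. h integrable_on ({lo..hi} \<inter> SS r A c e)" using Suc by simp
  have Ar: "A r \<in> three" using Suc by simp
  let ?R = "SS r A c e"
  let ?X = "{lo..hi} \<inter> ({t. c r + e r*t \<in> A r} \<inter> ?R)"
  have "h integrable_on ?X"
  proof (cases "e r = 0")
    case True then show ?thesis using step_zero[OF True, of lo hi "c r" "A r" ?R] IH by auto
  next
    case False
    show ?thesis
    proof (cases "A r = {0}")
      case True
      then show ?thesis using spike[OF step_pt[OF False, where lo=lo and hi=hi and c="c r" and R="SS r A c e"]] by auto
    next
      case A: False
      then have A': "A r = {0..} \<or> A r = {0<..}" using Ar by (auto simp: three_def)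
      show ?thesis
      proof (cases "e r > 0")
        case True
        then show ?thesis using spike[OF step_pos[OF True A', where lo=lo and hi=hi and R="SS r A c e"]] IH by auto
      next
        case F: False
        have neg: "e r < 0" using False F by simp
        show ?thesis using spike[OF step_neg[OF neg A', where lo=lo and hi=hi and R="SS r A c e"]] IH by auto
      qed
    qed
  qed
  then show ?case by (simp add: SS_Suc)
qed



lemma cmp: "(e1::real) > 0 \<Longrightarrow> e2 > 0 \<Longrightarrow> (-c1/e1 \<le> -c2/e2) \<longleftrightarrow> 0 \<le> c1*e2 - c2*e1"
  by (simp add: field_simps)

lemma key_step:
  fixes c1 e1 c2 e2 c e :: real and g :: "real \<Rightarrow> real"
  assumes "A \<in> three"
  shows "indicator {0<..} e1 * indicator {0<..} e2 * integral ({-c1/e1..-c2/e2} \<inter> ({t. c + e*t \<in> A} \<inter> R)) g =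
   indicator {0} e * indicator A c * (indicator {0<..} e1 * indicator {0<..} e2 * integral ({-c1/e1..-c2/e2} \<inter> R) g)
   + (if A = {0} then 0 else
      indicator {0<..} e * indicator {0..} (c*e1 - c1*e) * (indicator {0<..} e1 * indicator {0<..} e2 * integral ({-c1/e1..-c2/e2} \<inter> R) g)
    + indicator {0<..} e1 * indicator {0<..} (c1*e - c*e1) * (indicator {0<..} e * indicator {0<..} e2 * integral ({-c/e..-c2/e2} \<inter> R) g)
    + indicator {0<..} (-e) * indicator {0..} (c2*(-e) - (-c)*e2) * (indicator {0<..} e1 * indicator {0<..} e2 * integral ({-c1/e1..-c2/e2} \<inter> R) g)
    + indicator {0<..} e2 * indicator {0<..} ((-c)*e2 - c2*(-e)) * (indicator {0<..} e1 * indicator {0<..} (-e) * integral ({-c1/e1..-(-c)/(-e)} \<inter> R) g))"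
proof (cases "e1 > 0 \<and> e2 > 0")
  case False
  then show ?thesis by (auto simp: indicator_def)
next
  case True
  then have e1: "e1 > 0" and e2: "e2 > 0" by auto
  let ?lo = "-c1/e1" and ?hi = "-c2/e2"
  let ?I = "\<lambda>l h. integral ({l..h} \<inter> R) g"
  show ?thesis
  proof (cases "e = 0")
    case True
    then show ?thesis using step_zero[OF True, of ?lo ?hi c A R] e1 e2 by (auto simp: indicator_def)
  next
    case ne: False
    show ?thesis
    proof (cases "A = {0}")
      case True
      have "integral ({?lo..?hi} \<inter> ({t. c + e*t \<in> A} \<inter> R)) g = integral {} g"
        using spike[OF step_pt[OF ne, where lo="?lo" and hi="?hi" and c=c and R=R]] True by blast
      then show ?thesis using True ne by (simp add: indicator_def)
    next
      case A: False
      then have A': "A = {0..} \<or> A = {0<..}" using assms by (auto simp: three_def)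
      show ?thesis
      proof (cases "e > 0")
        case ep: True
        have X: "integral ({?lo..?hi} \<inter> ({t. c + e*t \<in> A} \<inter> R)) g = ?I (max ?lo (-c/e)) ?hi"
          using spike[OF step_pos[OF ep A', where lo="?lo" and hi="?hi" and c=c and R=R]] by blast
        show ?thesis
        proof (cases "-c/e \<le> ?lo")
          case True
          then have "0 \<le> c*e1 - c1*e" using cmp[OF ep e1, of c c1] by simp
          then show ?thesis using X True A ep e1 e2 by (simp add: indicator_def max_def)
        next
          case False
          then have "\<not> 0 \<le> c*e1 - c1*e" using cmp[OF ep e1, of c c1] by simp
          then have "0 < c1*e - c*e1" by simp
          then show ?thesis using X False A ep e1 e2 by (simp add: indicator_def max_def)
        qed
      next
        case en: False
        then have en': "e < 0" using ne by simp
        then have men: "-e > 0" by simp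
        have X: "integral ({?lo..?hi} \<inter> ({t. c + e*t \<in> A} \<inter> R)) g = ?I ?lo (min ?hi (-c/e))"
          using spike[OF step_neg[OF en' A', where lo="?lo" and hi="?hi" and c=c and R=R]] by blast
        show ?thesis
        proof (cases "?hi \<le> -c/e")
          case True
          then have "0 \<le> c2*(-e) - (-c)*e2" using cmp[OF e2 men, of c2 "-c"] by simp
          then show ?thesis using X True A en' e1 e2 by (simp add: indicator_def min_def)
        next
          case False
          then have "\<not> 0 \<le> c2*(-e) - (-c)*e2" using cmp[OF e2 men, of c2 "-c"] by simp
          then have "0 < (-c)*e2 - c2*(-e)" by simp
          then show ?thesis using X False A en' e1 e2 by (simp add: indicator_def min_def)
        qed
      qed
    qed
  qed
qed



lemma base:
  assumes "G \<in> Tset N" "c1 \<in> LF m N" "e1 \<in> poly_fun m" "c2 \<in> LF m N" "e2 \<in> poly_fun m"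
  shows "(\<lambda>\<theta> x. indicator {0<..} (e1 \<theta>) * indicator {0<..} (e2 \<theta>) *
      integral {-c1 \<theta> x/e1 \<theta>..-c2 \<theta> x/e2 \<theta>} (G x)) \<in> A_space m N"
  using assms(1)
proof (induction G rule: Tset.induct)
  case zero then show ?case by (simp add: A_space.zero)
next
  case (step q h k)
  define M where "M \<theta> x = indicator {0<..} (e1 \<theta>) * indicator {0<..} (e2 \<theta>) *
      indicator {0..} (c1 \<theta> x * e2 \<theta> - c2 \<theta> x * e1 \<theta>) *
      (((- c2 \<theta> x) * (1 / e2 \<theta>)) ^ Suc k - ((- c1 \<theta> x) * (1 / e1 \<theta>)) ^ Suc k) * (1 / Suc k)" for \<theta> x
  have MA: "M \<in> A_space m N"
  proof -
    have "(\<lambda>\<theta> x. ((- c2 \<theta> x) * (1 / e2 \<theta>)) ^ Suc k + (-1) * ((- c1 \<theta> x) * (1 / e1 \<theta>)) ^ Suc k) \<in> A_space m N"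
      using assms by (intro A_add A_smult A_pow A_mult A_LF LF_neg A_rat inv_rat)
    moreover have "(\<lambda>\<theta> x. indicator {0<..} (e1 \<theta>)) \<in> A_space m N" "(\<lambda>\<theta> x. indicator {0<..} (e2 \<theta>)) \<in> A_space m N"
      using assms by (auto intro!: A_ind LF_poly simp: three_def)
    moreover have "(\<lambda>\<theta> x. indicator {0..} (c1 \<theta> x * e2 \<theta> - c2 \<theta> x * e1 \<theta>)) \<in> A_space m N"
      using assms by (auto intro!: A_ind LF_cross simp: three_def)
    ultimately have "(\<lambda>\<theta> x. indicator {0<..} (e1 \<theta>) * indicator {0<..} (e2 \<theta>) *
      indicator {0..} (c1 \<theta> x * e2 \<theta> - c2 \<theta> x * e1 \<theta>) *
      (((- c2 \<theta> x) * (1 / e2 \<theta>)) ^ Suc k + (-1) * ((- c1 \<theta> x) * (1 / e1 \<theta>)) ^ Suc k) * (1 / Suc k)) \<in> A_space m N"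
      by (intro A_mult A_const)
    then show ?thesis unfolding M_def by simp
  qed
  have Meq: "M \<theta> x = indicator {0<..} (e1 \<theta>) * indicator {0<..} (e2 \<theta>) * integral {-c1 \<theta> x/e1 \<theta>..-c2 \<theta> x/e2 \<theta>} (\<lambda>t. t ^ k)" for \<theta> x
  proof (cases "e1 \<theta> > 0 \<and> e2 \<theta> > 0")
    case True
    then show ?thesis unfolding M_def int_power cmp[of "e1 \<theta>" "e2 \<theta>"]
      by (auto simp: indicator_def power_mult_distrib field_simps)
  next
    case False then show ?thesis unfolding M_def by (auto simp: indicator_def)
  qed
  have eq: "integral {-c1 \<theta> x/e1 \<theta>..-c2 \<theta> x/e2 \<theta>} (\<lambda>t. q x * t ^ k + h x t) =
     q x * integral {-c1 \<theta> x/e1 \<theta>..-c2 \<theta> x/e2 \<theta>} (\<lambda>t. t ^ k) + integral {-c1 \<theta> x/e1 \<theta>..-c2 \<theta> x/e2 \<theta>} (h x)" for \<theta> x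
  proof -
    have i1: "(\<lambda>t. t ^ k) integrable_on {-c1 \<theta> x/e1 \<theta>..-c2 \<theta> x/e2 \<theta>}"
      by (intro integrable_continuous_interval continuous_intros)
    have i2: "h x integrable_on {-c1 \<theta> x/e1 \<theta>..-c2 \<theta> x/e2 \<theta>}"
      by (intro integrable_continuous_interval T_cont[OF step.hyps(2)])
    show ?thesis using integral_add[OF integrable_cmul[OF i1, of "q x"] i2] by simp
  qed
  have "(\<lambda>\<theta> x. q x * M \<theta> x + indicator {0<..} (e1 \<theta>) * indicator {0<..} (e2 \<theta>) *
      integral {-c1 \<theta> x/e1 \<theta>..-c2 \<theta> x/e2 \<theta>} (h x)) \<in> A_space m N"
    using A_add[OF A_mult[OF A_polyx[OF step.hyps(1)] MA] step.IH] by simp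
  then show ?case unfolding eq Meq by (simp add: algebra_simps)
qed



lemma main_ind:
  fixes A :: "nat \<Rightarrow> real set" and cc :: "nat \<Rightarrow> (nat \<Rightarrow> real) \<Rightarrow> (nat \<Rightarrow> real) \<Rightarrow> real"
    and ee :: "nat \<Rightarrow> (nat \<Rightarrow> real) \<Rightarrow> real"
  assumes "\<forall>i<r. A i \<in> three" "\<forall>i<r. cc i \<in> LF m N" "\<forall>i<r. ee i \<in> poly_fun m" "G \<in> Tset N"
  shows "\<forall>c1 e1 c2 e2. c1 \<in> LF m N \<longrightarrow> e1 \<in> poly_fun m \<longrightarrow> c2 \<in> LF m N \<longrightarrow> e2 \<in> poly_fun m \<longrightarrow>
     (\<lambda>\<theta> x. indicator {0<..} (e1 \<theta>) * indicator {0<..} (e2 \<theta>) *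
      integral ({-c1 \<theta> x/e1 \<theta>..-c2 \<theta> x/e2 \<theta>} \<inter> SS r A (\<lambda>i. cc i \<theta> x) (\<lambda>i. ee i \<theta>)) (G x)) \<in> A_space m N"
  using assms(1-3)
proof (induction r)
  case 0
  then show ?case using base[OF assms(4)] by simp
next
  case (Suc r)
  have IH: "\<And>c1 e1 c2 e2. c1 \<in> LF m N \<Longrightarrow> e1 \<in> poly_fun m \<Longrightarrow> c2 \<in> LF m N \<Longrightarrow> e2 \<in> poly_fun m \<Longrightarrow>
     (\<lambda>\<theta> x. indicator {0<..} (e1 \<theta>) * indicator {0<..} (e2 \<theta>) *
      integral ({-c1 \<theta> x/e1 \<theta>..-c2 \<theta> x/e2 \<theta>} \<inter> SS r A (\<lambda>i. cc i \<theta> x) (\<lambda>i. ee i \<theta>)) (G x)) \<in> A_space m N"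
    using Suc by auto
  have Ar: "A r \<in> three" and cr: "cc r \<in> LF m N" and er: "ee r \<in> poly_fun m" using Suc.prems by auto
  have ncr: "(\<lambda>\<theta> x. - cc r \<theta> x) \<in> LF m N" using LF_neg[OF cr] .
  have ner: "(\<lambda>\<theta>. - ee r \<theta>) \<in> poly_fun m" using poly_neg[OF er] .
  show ?case
  proof (intro allI impI)
    fix c1 e1 c2 e2
    assume c1: "c1 \<in> LF m N" and e1: "e1 \<in> poly_fun m" and c2: "c2 \<in> LF m N" and e2: "e2 \<in> poly_fun m"
    let ?R = "\<lambda>\<theta> x. SS r A (\<lambda>i. cc i \<theta> x) (\<lambda>i. ee i \<theta>)"
    let ?F1 = "\<lambda>\<theta> x. indicator {0<..} (e1 \<theta>) * indicator {0<..} (e2 \<theta>) * integral ({-c1 \<theta> x/e1 \<theta>..-c2 \<theta> x/e2 \<theta>} \<inter> ?R \<theta> x) (G x)"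
    let ?F2 = "\<lambda>\<theta> x. indicator {0<..} (ee r \<theta>) * indicator {0<..} (e2 \<theta>) * integral ({-cc r \<theta> x/ee r \<theta>..-c2 \<theta> x/e2 \<theta>} \<inter> ?R \<theta> x) (G x)"
    let ?F3 = "\<lambda>\<theta> x. indicator {0<..} (e1 \<theta>) * indicator {0<..} (- ee r \<theta>) * integral ({-c1 \<theta> x/e1 \<theta>..-(- cc r \<theta> x)/(- ee r \<theta>)} \<inter> ?R \<theta> x) (G x)"
    have F1: "?F1 \<in> A_space m N" using IH[OF c1 e1 c2 e2] .
    have F2: "?F2 \<in> A_space m N" using IH[OF cr er c2 e2] .
    have F3: "?F3 \<in> A_space m N" using IH[OF c1 e1 ncr ner] .
    have I0: "(\<lambda>\<theta> x. indicator {0} (ee r \<theta>)) \<in> A_space m N"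
      using A_ind[OF LF_poly[OF er]] by (simp add: three_def)
    have IA: "(\<lambda>\<theta> x. indicator (A r) (cc r \<theta> x)) \<in> A_space m N"
      using A_ind[OF cr Ar] .
    have Ie: "(\<lambda>\<theta> x. indicator {0<..} (ee r \<theta>)) \<in> A_space m N"
      using A_ind[OF LF_poly[OF er]] by (simp add: three_def)
    have Ine: "(\<lambda>\<theta> x. indicator {0<..} (- ee r \<theta>)) \<in> A_space m N"
      using A_ind[OF LF_poly[OF ner]] by (simp add: three_def)
    have Ie1: "(\<lambda>\<theta> x. indicator {0<..} (e1 \<theta>)) \<in> A_space m N"
      using A_ind[OF LF_poly[OF e1]] by (simp add: three_def)
    have Ie2: "(\<lambda>\<theta> x. indicator {0<..} (e2 \<theta>)) \<in> A_space m N"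
      using A_ind[OF LF_poly[OF e2]] by (simp add: three_def)
    have X1: "(\<lambda>\<theta> x. indicator {0..} (cc r \<theta> x * e1 \<theta> - c1 \<theta> x * ee r \<theta>)) \<in> A_space m N"
      using A_ind[OF LF_cross[OF cr c1 er e1]] by (simp add: three_def)
    have X2: "(\<lambda>\<theta> x. indicator {0<..} (c1 \<theta> x * ee r \<theta> - cc r \<theta> x * e1 \<theta>)) \<in> A_space m N"
      using A_ind[OF LF_cross[OF c1 cr e1 er]] by (simp add: three_def)
    have X3: "(\<lambda>\<theta> x. indicator {0..} (c2 \<theta> x * (- ee r \<theta>) - (- cc r \<theta> x) * e2 \<theta>)) \<in> A_space m N"
      using A_ind[OF LF_cross[OF c2 ncr e2 ner]] by (simp add: three_def)
    have X4: "(\<lambda>\<theta> x. indicator {0<..} ((- cc r \<theta> x) * e2 \<theta> - c2 \<theta> x * (- ee r \<theta>))) \<in> A_space m N"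
      using A_ind[OF LF_cross[OF ncr c2 ner e2]] by (simp add: three_def)
    have eq: "(\<lambda>\<theta> x. indicator {0<..} (e1 \<theta>) * indicator {0<..} (e2 \<theta>) *
      integral ({-c1 \<theta> x/e1 \<theta>..-c2 \<theta> x/e2 \<theta>} \<inter> SS (Suc r) A (\<lambda>i. cc i \<theta> x) (\<lambda>i. ee i \<theta>)) (G x)) =
      (\<lambda>\<theta> x. indicator {0} (ee r \<theta>) * indicator (A r) (cc r \<theta> x) * ?F1 \<theta> x
   + (if A r = {0} then 0 else
      indicator {0<..} (ee r \<theta>) * indicator {0..} (cc r \<theta> x * e1 \<theta> - c1 \<theta> x * ee r \<theta>) * ?F1 \<theta> x
    + indicator {0<..} (e1 \<theta>) * indicator {0<..} (c1 \<theta> x * ee r \<theta> - cc r \<theta> x * e1 \<theta>) * ?F2 \<theta> x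
    + indicator {0<..} (- ee r \<theta>) * indicator {0..} (c2 \<theta> x * (- ee r \<theta>) - (- cc r \<theta> x) * e2 \<theta>) * ?F1 \<theta> x
    + indicator {0<..} (e2 \<theta>) * indicator {0<..} ((- cc r \<theta> x) * e2 \<theta> - c2 \<theta> x * (- ee r \<theta>)) * ?F3 \<theta> x))"
      unfolding SS_Suc by (intro ext key_step[OF Ar])
    show "(\<lambda>\<theta> x. indicator {0<..} (e1 \<theta>) * indicator {0<..} (e2 \<theta>) *
      integral ({-c1 \<theta> x/e1 \<theta>..-c2 \<theta> x/e2 \<theta>} \<inter> SS (Suc r) A (\<lambda>i. cc i \<theta> x) (\<lambda>i. ee i \<theta>)) (G x)) \<in> A_space m N"
    proof (cases "A r = {0}")
      case True
      show ?thesis unfolding eq using A_mult[OF A_mult[OF I0 IA] F1] True by simp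
    next
      case False
      show ?thesis unfolding eq using False
        by (simp only: if_False, intro A_add A_mult I0 IA F1 F2 F3 Ie Ine Ie1 Ie2 X1 X2 X3 X4)
    qed
  qed
qed



lemma prod_ind: "(\<Prod>i<r. indicator (A i) (c i + e i * t) :: real) = indicator (SS r A c e) t"
  by (induction r) (auto simp: SS_Suc indicator_def)

lemma gen_case:
  fixes a b :: real
  assumes "g \<in> A_gen m (Suc N)"
  shows "(\<lambda>\<theta> x. integral {a..b} (\<lambda>t. g \<theta> (x(N := t)))) \<in> A_space m N \<and>
         (\<forall>\<theta> x. (\<lambda>t. g \<theta> (x(N := t))) integrable_on {a..b})"
proof -
  obtain r :: nat and A :: "nat \<Rightarrow> real set" and R Q and P :: "nat \<Rightarrow> nat \<Rightarrow> (nat \<Rightarrow> real) \<Rightarrow> real" where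
    g: "0 < r" "\<forall>i<r. A i \<in> {{0}, {0..}, {0<..}}" "R \<in> rat_fun m" "Q \<in> poly_fun (Suc N)"
      "\<forall>i<r. \<forall>j\<le>Suc N. P i j \<in> poly_fun m"
      "\<forall>\<theta> x. g \<theta> x = R \<theta> * Q x * (\<Prod>i<r. indicator (A i) (P i 0 \<theta> + (\<Sum>j=1..Suc N. P i j \<theta> * x (j - 1))))"
    using assms unfolding A_gen_def mem_Collect_eq by (elim exE conjE) blast
  define cc where "cc i \<theta> x = P i 0 \<theta> + (\<Sum>j=1..N. P i j \<theta> * x (j - 1))" for i \<theta> x
  define ee where "ee i = P i (Suc N)" for i
  define G where "G x t = Q (x(N := t))" for x t
  let ?S = "\<lambda>\<theta> x. SS r A (\<lambda>i. cc i \<theta> x) (\<lambda>i. ee i \<theta>)"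
  have sumeq: "(\<Sum>j=1..Suc N. P i j \<theta> * (x(N := t)) (j - 1)) = cc i \<theta> x - P i 0 \<theta> + ee i \<theta> * t" for i \<theta> x t
  proof -
    have "(\<Sum>j=1..N. P i j \<theta> * (x(N := t)) (j - 1)) = (\<Sum>j=1..N. P i j \<theta> * x (j - 1))"
      by (rule sum.cong) auto
    then show ?thesis unfolding cc_def ee_def by simp
  qed
  have geq: "g \<theta> (x(N := t)) = R \<theta> * (if t \<in> ?S \<theta> x then G x t else 0)" for \<theta> x t
  proof -
    have "g \<theta> (x(N := t)) = R \<theta> * Q (x(N := t)) * (\<Prod>i<r. indicator (A i) (P i 0 \<theta> + (\<Sum>j=1..Suc N. P i j \<theta> * (x(N := t)) (j - 1))))"
      using g(6) by blast
    also have "\<dots> = R \<theta> * Q (x(N := t)) * (\<Prod>i<r. indicator (A i) (cc i \<theta> x + ee i \<theta> * t))"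
      unfolding sumeq by simp
    also have "\<dots> = R \<theta> * Q (x(N := t)) * indicator (?S \<theta> x) t"
      by (simp only: prod_ind)
    finally show ?thesis by (simp add: G_def indicator_def)
  qed
  have A3: "\<forall>i<r. A i \<in> three" using g(2) by (simp add: three_def)
  have GT: "G \<in> Tset N" unfolding G_def using T_poly[OF g(4)] .
  have ccLF: "\<forall>i<r. cc i \<in> LF m N"
  proof (intro allI impI)
    fix i assume "i < r"
    then show "cc i \<in> LF m N" unfolding LF_def cc_def using g(5)
      by (intro CollectI exI[of _ "P i"]) auto
  qed
  have eeP: "\<forall>i<r. ee i \<in> poly_fun m" using g(5) unfolding ee_def by auto
  have intG: "(G x) integrable_on ({a..b} \<inter> ?S \<theta> x)" for \<theta> x
    by (rule integrable_SS[OF T_cont[OF GT] A3])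
  have inteq: "integral {a..b} (\<lambda>t. g \<theta> (x(N := t))) = R \<theta> * integral ({a..b} \<inter> ?S \<theta> x) (G x)" for \<theta> x
  proof -
    have "integral {a..b} (\<lambda>t. g \<theta> (x(N := t))) = integral {a..b} (\<lambda>t. R \<theta> *\<^sub>R (if t \<in> ?S \<theta> x then G x t else 0))"
      unfolding geq by simp
    also have "\<dots> = R \<theta> * integral (?S \<theta> x \<inter> {a..b}) (G x)"
      unfolding integral_cmul integral_restrict_Int by simp
    finally show ?thesis by (simp add: Int_commute)
  qed
  have c: "(\<lambda>\<theta> x. - a) \<in> LF m N" "(\<lambda>\<theta> x. - b) \<in> LF m N" "(\<lambda>\<theta>. 1) \<in> poly_fun m"
    by (auto intro: LF_poly poly_fun.const)
  have M: "(\<lambda>\<theta> x. indicator {0<..} (1::real) * indicator {0<..} (1::real) *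
      integral ({- (-a)/1..- (-b)/1} \<inter> ?S \<theta> x) (G x)) \<in> A_space m N"
    using main_ind[OF A3 ccLF eeP GT] c by blast
  have "(\<lambda>\<theta> x. R \<theta> * integral ({a..b} \<inter> ?S \<theta> x) (G x)) \<in> A_space m N"
    using A_mult[OF A_rat[OF g(3)] M] by simp
  moreover have "(\<lambda>t. g \<theta> (x(N := t))) integrable_on {a..b}" for \<theta> x
  proof -
    have "(\<lambda>t. if t \<in> ?S \<theta> x then G x t else 0) integrable_on {a..b}"
      using intG[of x \<theta>] by (simp add: integrable_restrict_Int Int_commute)
    then have "(\<lambda>t. R \<theta> *\<^sub>R (if t \<in> ?S \<theta> x then G x t else 0)) integrable_on {a..b}"
      by (rule integrable_cmul)
    then show ?thesis unfolding geq by simp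
  qed
  ultimately show ?thesis unfolding inteq by simp
qed

theorem proposition4p8:
  fixes m n :: nat and a b :: real
    and f :: "(nat \<Rightarrow> real) \<Rightarrow> (nat \<Rightarrow> real) \<Rightarrow> real"
  assumes "1 \<le> m" and "1 \<le> n" and "a < b"
    and "f \<in> A_space m n"
  shows "(\<lambda>\<theta> x. integral {a..b} (\<lambda>t. f \<theta> (x(n - 1 := t)))) \<in> A_space m (n - 1)"
proof -
  obtain N where n: "n = Suc N" using assms(2) by (cases n) auto
  have "(\<lambda>\<theta> x. integral {a..b} (\<lambda>t. f \<theta> (x(N := t)))) \<in> A_space m N \<and>
         (\<forall>\<theta> x. (\<lambda>t. f \<theta> (x(N := t))) integrable_on {a..b})"
    using assms(4) unfolding n
  proof (induction f rule: A_space.induct)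
    case zero then show ?case by (simp add: A_space.zero integrable_0)
  next
    case (step g h c)
    have G: "(\<lambda>\<theta> x. integral {a..b} (\<lambda>t. g \<theta> (x(N := t)))) \<in> A_space m N"
      "\<And>\<theta> x. (\<lambda>t. g \<theta> (x(N := t))) integrable_on {a..b}"
      using gen_case[OF step.hyps(1), of a b] by (auto simp del: fun_upd_apply)
    have H: "(\<lambda>\<theta> x. integral {a..b} (\<lambda>t. h \<theta> (x(N := t)))) \<in> A_space m N"
      "\<And>\<theta> x. (\<lambda>t. h \<theta> (x(N := t))) integrable_on {a..b}"
      using step.IH by (auto simp del: fun_upd_apply)
    have ig: "(\<lambda>t. c * g \<theta> (x(N := t))) integrable_on {a..b}" for \<theta> x
      using integrable_cmul[OF G(2)[of \<theta> x], of c] by simp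
    have ieq: "integral {a..b} (\<lambda>t. c * g \<theta> (x(N := t)) + h \<theta> (x(N := t))) =
        c * integral {a..b} (\<lambda>t. g \<theta> (x(N := t))) + integral {a..b} (\<lambda>t. h \<theta> (x(N := t)))" for \<theta> x
      using integral_add[OF ig H(2)] integral_cmul[where c=c and f="\<lambda>t. g \<theta> (x(N := t))" and S="{a..b}"] by simp
    show ?case
    proof
      show "(\<lambda>\<theta> x. integral {a..b} (\<lambda>t. c * g \<theta> (x(N := t)) + h \<theta> (x(N := t)))) \<in> A_space m N"
        unfolding ieq by (intro A_add A_smult G H)
      show "\<forall>\<theta> x. (\<lambda>t. c * g \<theta> (x(N := t)) + h \<theta> (x(N := t))) integrable_on {a..b}"
        using integrable_add[OF ig H(2)] by blast
    qed
  qed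
  then show ?thesis using n by simp
qed

end
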